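(* Let $F(x,y)=(f(x,y),x,y)$ be a germ at $o=(0,0)$ of a real analytic map into $\mathbf{R}^3_1$ with $f(0,0)=0$, $f_x(0,0)=0$, $f_y(0,0)=1$, such that $\{B_F\neq0\}$ is dense in the domain, $A_F-\varphi B_F^2\equiv0$ for some real analytic function germ $\varphi$ at $o$, and $\nabla B_F(o)=(0,0)$. Let $\alpha_F(y):=f_{xx}(0,y)$ and $\beta_F(y):=\tfrac12 f_{xxx}(0,y)$. Then there exists a real number $\mu_F$ such that $$\alpha_F'+\alpha_F^2+\mu_F=0,\qquad \beta_F''+4\alpha_F\beta_F'=0.$$ Moreover, if $\mu_F>0$ (resp. $\mu_F<0$) then $F$ has no time-like points (resp. no space-like points) near $o$. In particular, if $F$ changes causal type, then $\mu_F=0$.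
   Context: $\mathbf{R}^3_1$ is Lorentz–Minkowski 3-space with coordinates $(t,x,y)$ and inner product $-dt^2+dx^2+dy^2$. $B_F:=1-f_x^2-f_y^2$, $A_F:=(1-f_x^2)f_{yy}+2f_xf_yf_{xy}+(1-f_y^2)f_{xx}$. A point is space-like if $B_F>0$, time-like if $B_F<0$. $F$ changes causal type means every neighborhood of $o$ contains both space-like and time-like points. Primes denote $d/dy$. (For such $F$ one has $f(x,y)=y+\frac{\alpha_F(y)}2x^2+\frac{\beta_F(y)}3x^3+O(x^4)$.) *)

theory Defs
  imports "HOL-Analysis.Analysis"
begin

text \<open>Real analytic functions of two real variables on an open set U: locally the
  (unconditionally, hence absolutely) convergent sum of a double power series.\<close>
definition real_analytic_on2 :: "(real \<times> real) set \<Rightarrow> (real \<times> real \<Rightarrow> real) \<Rightarrow> bool" where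
  "real_analytic_on2 U g \<longleftrightarrow>
     (\<forall>p\<in>U. \<exists>r>0. ball p r \<subseteq> U \<and> (\<exists>c :: nat \<times> nat \<Rightarrow> real.
        \<forall>q\<in>ball p r. ((\<lambda>(i,j). c (i,j) * (fst q - fst p)^i * (snd q - snd p)^j) has_sum g q) UNIV))"

definition pdx :: "(real \<times> real \<Rightarrow> real) \<Rightarrow> real \<times> real \<Rightarrow> real" where
  "pdx g p = deriv (\<lambda>t. g (t, snd p)) (fst p)"

definition pdy :: "(real \<times> real \<Rightarrow> real) \<Rightarrow> real \<times> real \<Rightarrow> real" where
  "pdy g p = deriv (\<lambda>t. g (fst p, t)) (snd p)"

definition BF :: "(real \<times> real \<Rightarrow> real) \<Rightarrow> real \<times> real \<Rightarrow> real" where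
  "BF f p = 1 - (pdx f p)^2 - (pdy f p)^2"

definition AF :: "(real \<times> real \<Rightarrow> real) \<Rightarrow> real \<times> real \<Rightarrow> real" where
  "AF f p = (1 - (pdx f p)^2) * pdy (pdy f) p + 2 * pdx f p * pdy f p * pdy (pdx f) p
            + (1 - (pdy f p)^2) * pdx (pdx f) p"

definition alphaF :: "(real \<times> real \<Rightarrow> real) \<Rightarrow> real \<Rightarrow> real" where
  "alphaF f y = pdx (pdx f) (0, y)"

definition betaF :: "(real \<times> real \<Rightarrow> real) \<Rightarrow> real \<Rightarrow> real" where
  "betaF f y = pdx (pdx (pdx f)) (0, y) / 2"

definition changes_causal_type :: "(real \<times> real) set \<Rightarrow> (real \<times> real \<Rightarrow> real) \<Rightarrow> bool" where
  "changes_causal_type U f \<longleftrightarrow>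
     (\<forall>e>0. (\<exists>p\<in>U \<inter> ball (0,0) e. BF f p > 0) \<and> (\<exists>p\<in>U \<inter> ball (0,0) e. BF f p < 0))"

end

theory Submission
  imports Defs
begin

definition T :: "(nat \<times> nat \<Rightarrow> real) \<Rightarrow> real \<Rightarrow> real \<Rightarrow> nat \<times> nat \<Rightarrow> real" where
  "T c x y = (\<lambda>(i,j). c (i,j) * x^i * y^j)"

definition S :: "(nat \<times> nat \<Rightarrow> real) \<Rightarrow> real \<Rightarrow> real \<Rightarrow> real" where
  "S c x y = infsum (T c x y) UNIV"

definition good :: "(nat \<times> nat \<Rightarrow> real) \<Rightarrow> real \<Rightarrow> bool" where
  "good c s \<longleftrightarrow> (\<forall>t. 0 \<le> t \<and> t < s \<longrightarrow> T (\<lambda>ij. \<bar>c ij\<bar>) t t summable_on UNIV)"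

definition Dx :: "(nat \<times> nat \<Rightarrow> real) \<Rightarrow> nat \<times> nat \<Rightarrow> real" where
  "Dx c = (\<lambda>(i,j). of_nat (Suc i) * c (Suc i, j))"

definition swp :: "(nat \<times> nat \<Rightarrow> real) \<Rightarrow> nat \<times> nat \<Rightarrow> real" where
  "swp c = (\<lambda>(i,j). c (j,i))"

definition Dy :: "(nat \<times> nat \<Rightarrow> real) \<Rightarrow> nat \<times> nat \<Rightarrow> real" where
  "Dy c = swp (Dx (swp c))"

lemma good_abs_summable:
  assumes g: "good c s" and x: "\<bar>x\<bar> < s" and y: "\<bar>y\<bar> < s"
  shows "(\<lambda>ij. norm (T c x y ij)) summable_on UNIV"
proof -
  define t where "t = max \<bar>x\<bar> \<bar>y\<bar>"
  have t: "0 \<le> t" "t < s" using x y by (auto simp: t_def)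
  have sm: "T (\<lambda>ij. \<bar>c ij\<bar>) t t summable_on UNIV" using g t by (auto simp: good_def)
  show ?thesis
  proof (rule Infinite_Sum.abs_summable_on_comparison_test'[OF sm])
    fix ij :: "nat \<times> nat"
    obtain i j where ij: "ij = (i,j)" by (cases ij)
    have "\<bar>x\<bar>^i \<le> t^i" by (rule power_mono) (auto simp: t_def)
    moreover have "\<bar>y\<bar>^j \<le> t^j" by (rule power_mono) (auto simp: t_def)
    ultimately have "\<bar>c (i,j)\<bar> * \<bar>x\<bar>^i * \<bar>y\<bar>^j \<le> \<bar>c (i,j)\<bar> * t^i * t^j"
      by (intro mult_mono) (auto simp: t)
    then show "norm (T c x y ij) \<le> T (\<lambda>ij. \<bar>c ij\<bar>) t t ij"
      by (simp add: T_def ij abs_mult power_abs)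
  qed
qed

lemma good_summable:
  assumes "good c s" "\<bar>x\<bar> < s" "\<bar>y\<bar> < s"
  shows "T c x y summable_on UNIV"
  using good_abs_summable[OF assms] summable_on_iff_abs_summable_on_real by metis

lemma infsum_nat_suminf:
  fixes f :: "nat \<Rightarrow> real"
  assumes "f summable_on UNIV"
  shows "infsum f UNIV = suminf f" "summable f"
proof -
  have "f sums infsum f UNIV" using assms has_sum_imp_sums summable_iff_has_sum_infsum by blast
  then show "infsum f UNIV = suminf f" "summable f" using sums_unique sums_summable by auto
qed

lemma xslice:
  assumes g: "good c s" and x: "\<bar>x\<bar> < s" and y: "\<bar>y\<bar> < s"
  shows "S c x y = (\<Sum>n. (\<Sum>\<^sub>\<infinity>j. c (n,j) * y^j) * x^n)"
    and "summable (\<lambda>n. (\<Sum>\<^sub>\<infinity>j. c (n,j) * y^j) * x^n)"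
proof -
  have sm: "T c x y summable_on Sigma UNIV (\<lambda>_. UNIV)"
    using good_summable[OF assms] by simp
  have inner: "(\<lambda>j. T c x y (i, j)) summable_on UNIV" for i
    using summable_on_SigmaD1[of "\<lambda>i j. T c x y (i,j)" UNIV "\<lambda>_. UNIV" i] sm by auto
  have eq: "(\<Sum>\<^sub>\<infinity>j. T c x y (i, j)) = (\<Sum>\<^sub>\<infinity>j. c (i,j) * y^j) * x^i" for i
  proof -
    have "(\<Sum>\<^sub>\<infinity>j. T c x y (i, j)) = (\<Sum>\<^sub>\<infinity>j. (c (i,j) * y^j) * x^i)"
      by (rule infsum_cong) (simp add: T_def algebra_simps)
    also have "\<dots> = (\<Sum>\<^sub>\<infinity>j. c (i,j) * y^j) * x^i" by (rule infsum_cmult_left')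
    finally show ?thesis .
  qed
  have outer: "(\<lambda>i. \<Sum>\<^sub>\<infinity>j. T c x y (i, j)) summable_on UNIV"
    using summable_on_SigmaD[OF sm] inner by auto
  have "S c x y = (\<Sum>\<^sub>\<infinity>i. \<Sum>\<^sub>\<infinity>j. T c x y (i, j))"
    unfolding S_def using infsum_Sigma_banach[OF sm] by simp
  also have "\<dots> = (\<Sum>\<^sub>\<infinity>i. (\<Sum>\<^sub>\<infinity>j. c (i,j) * y^j) * x^i)" using eq by simp
  also have "\<dots> = (\<Sum>n. (\<Sum>\<^sub>\<infinity>j. c (n,j) * y^j) * x^n)"
    using infsum_nat_suminf outer eq by simp
  finally show "S c x y = (\<Sum>n. (\<Sum>\<^sub>\<infinity>j. c (n,j) * y^j) * x^n)" .
  show "summable (\<lambda>n. (\<Sum>\<^sub>\<infinity>j. c (n,j) * y^j) * x^n)"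
    using infsum_nat_suminf(2) outer eq by simp
qed

lemma T_abs_mono:
  assumes "T (\<lambda>ij. \<bar>c ij\<bar>) t t summable_on UNIV" "0 \<le> t'" "t' \<le> t"
  shows "T (\<lambda>ij. \<bar>c ij\<bar>) t' t' summable_on UNIV"
proof (rule summable_on_comparison_test[OF assms(1)])
  fix ij :: "nat \<times> nat"
  obtain i j where ij: "ij = (i,j)" by (cases ij)
  have "t'^i \<le> t^i" "t'^j \<le> t^j" using assms by (auto intro: power_mono)
  then show "T (\<lambda>ij. \<bar>c ij\<bar>) t' t' ij \<le> T (\<lambda>ij. \<bar>c ij\<bar>) t t ij"
    using assms by (auto simp: T_def ij intro!: mult_mono)
  show "0 \<le> T (\<lambda>ij. \<bar>c ij\<bar>) t' t' ij" using assms by (simp add: T_def ij)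
qed

lemma good_Dx:
  assumes g: "good c s"
  shows "good (Dx c) s"
  unfolding good_def
proof (intro allI impI)
  fix t0 :: real assume t0: "0 \<le> t0 \<and> t0 < s"
  define t where "t = max t0 (s/2)"
  have t: "0 < t" "t < s" "t0 \<le> t" using t0 by (auto simp: t_def)
  define u where "u = (t + s) / 2"
  have u: "t < u" "u < s" "0 < u" using t by (auto simp: u_def)
  have "norm (t/u) < 1" using t u by auto
  then have "convergent (\<lambda>n. of_nat n * (t/u) ^ n)"
    using powser_times_n_limit_0 convergent_def by blast
  then have "Bseq (\<lambda>n. of_nat n * (t/u) ^ n)" by (rule convergent_imp_Bseq)
  then obtain B where B: "B > 0" "\<And>n. norm (of_nat n * (t/u) ^ n) \<le> B"
    unfolding Bseq_def by blast
  have bnd: "of_nat (Suc i) * t^i \<le> (B/t) * u^(Suc i)" for i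
  proof -
    have "of_nat (Suc i) * (t/u)^(Suc i) \<le> B" using B(2)[of "Suc i"] t u by simp
    then have "of_nat (Suc i) * t^(Suc i) / u^(Suc i) \<le> B" by (simp add: power_divide)
    then have h: "of_nat (Suc i) * t^(Suc i) \<le> B * u^(Suc i)"
      using u by (simp add: pos_divide_le_eq)
    have "of_nat (Suc i) * t^i = (of_nat (Suc i) * t^(Suc i)) / t" using t by simp
    also have "\<dots> \<le> (B * u^(Suc i)) / t" by (rule divide_right_mono[OF h]) (use t in simp)
    also have "\<dots> = (B/t) * u^(Suc i)" by simp
    finally show ?thesis .
  qed
  have smu: "T (\<lambda>ij. \<bar>c ij\<bar>) u u summable_on UNIV" using g u by (simp add: good_def)
  have inj: "inj (\<lambda>(i::nat,j::nat). (Suc i, j))" by (auto simp: inj_def)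
  have "T (\<lambda>ij. \<bar>c ij\<bar>) u u summable_on ((\<lambda>(i,j). (Suc i, j)) ` UNIV)"
    by (rule summable_on_subset_banach[OF smu]) auto
  then have "(T (\<lambda>ij. \<bar>c ij\<bar>) u u \<circ> (\<lambda>(i,j). (Suc i, j))) summable_on UNIV"
    using summable_on_reindex[OF inj] by blast
  then have sm2: "(\<lambda>ij. (B/t) * (T (\<lambda>ij. \<bar>c ij\<bar>) u u \<circ> (\<lambda>(i,j). (Suc i, j))) ij) summable_on UNIV"
    by (rule summable_on_cmult_right)
  have "T (\<lambda>ij. \<bar>Dx c ij\<bar>) t t summable_on UNIV"
  proof (rule summable_on_comparison_test[OF sm2])
    fix ij :: "nat \<times> nat"
    obtain i j where ij: "ij = (i,j)" by (cases ij)
    have "t^j \<le> u^j" using t u by (auto intro: power_mono)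
    have "\<bar>c (Suc i, j)\<bar> * (of_nat (Suc i) * t^i) * t^j \<le> \<bar>c (Suc i, j)\<bar> * ((B/t) * u^(Suc i)) * u^j"
    proof (rule mult_mono)
      show "\<bar>c (Suc i, j)\<bar> * (of_nat (Suc i) * t^i) \<le> \<bar>c (Suc i, j)\<bar> * ((B/t) * u^(Suc i))"
        by (rule mult_left_mono[OF bnd]) simp
      show "0 \<le> \<bar>c (Suc i, j)\<bar> * ((B/t) * u^(Suc i))" using B t u by simp
    qed (use \<open>t^j \<le> u^j\<close> t in auto)
    moreover have e1: "T (\<lambda>ij. \<bar>Dx c ij\<bar>) t t ij = \<bar>c (Suc i, j)\<bar> * (of_nat (Suc i) * t^i) * t^j"
      by (simp add: T_def Dx_def ij abs_mult mult_ac)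
    moreover have e2: "(T (\<lambda>ij. \<bar>c ij\<bar>) u u \<circ> (\<lambda>(i,j). (Suc i, j))) ij = \<bar>c (Suc i, j)\<bar> * u^(Suc i) * u^j"
      by (simp add: T_def ij)
    moreover have "\<bar>c (Suc i, j)\<bar> * ((B/t) * u^(Suc i)) * u^j = (B/t) * (\<bar>c (Suc i, j)\<bar> * u^(Suc i) * u^j)"
      by (simp only: mult_ac)
    ultimately show "T (\<lambda>ij. \<bar>Dx c ij\<bar>) t t ij \<le> (B/t) * (T (\<lambda>ij. \<bar>c ij\<bar>) u u \<circ> (\<lambda>(i,j). (Suc i, j))) ij"
      by (simp only:)
    show "0 \<le> T (\<lambda>ij. \<bar>Dx c ij\<bar>) t t ij" using t by (simp add: T_def ij)
  qed
  then show "T (\<lambda>ij. \<bar>Dx c ij\<bar>) t0 t0 summable_on UNIV"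
    using T_abs_mono t t0 by blast
qed

lemma deriv_x:
  assumes g: "good c s" and x: "\<bar>x\<bar> < s" and y: "\<bar>y\<bar> < s"
  shows "((\<lambda>t. S c t y) has_real_derivative S (Dx c) x y) (at x)"
proof -
  define a where "a n = (\<Sum>\<^sub>\<infinity>j. c (n,j) * y^j)" for n
  define K where "K = (\<bar>x\<bar> + s) / 2"
  have K: "\<bar>x\<bar> < K" "\<bar>K\<bar> < s" using x y by (auto simp: K_def)
  have smK: "summable (\<lambda>n. a n * K^n)" using xslice(2)[OF g K(2) y] by (simp add: a_def)
  have d: "((\<lambda>t. \<Sum>n. a n * t^n) has_real_derivative (\<Sum>n. diffs a n * x^n)) (at x)"
    by (rule termdiffs_strong[OF smK]) (use K in auto)
  have d2: "((\<lambda>t. S c t y) has_real_derivative (\<Sum>n. diffs a n * x^n)) (at x)"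
  proof (rule has_field_derivative_transform_within_open[OF d, of "{t. \<bar>t\<bar> < s}"])
    show "open {t::real. \<bar>t\<bar> < s}" by (simp add: open_Collect_less continuous_intros)
    show "x \<in> {t. \<bar>t\<bar> < s}" using x by simp
    fix t :: real assume "t \<in> {t. \<bar>t\<bar> < s}"
    then show "(\<Sum>n. a n * t^n) = S c t y" using xslice(1)[OF g _ y, of t] by (simp add: a_def)
  qed
  have "S (Dx c) x y = (\<Sum>n. (\<Sum>\<^sub>\<infinity>j. Dx c (n,j) * y^j) * x^n)"
    by (rule xslice(1)[OF good_Dx[OF g] x y])
  also have "\<dots> = (\<Sum>n. diffs a n * x^n)"
  proof -
    have "(\<Sum>\<^sub>\<infinity>j. Dx c (n,j) * y^j) = diffs a n" for n
    proof -
      have "(\<Sum>\<^sub>\<infinity>j. Dx c (n,j) * y^j) = (\<Sum>\<^sub>\<infinity>j. of_nat (Suc n) * (c (Suc n,j) * y^j))"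
        by (rule infsum_cong) (simp add: Dx_def)
      also have "\<dots> = of_nat (Suc n) * a (Suc n)" unfolding a_def by (rule infsum_cmult_right')
      finally show ?thesis by (simp add: diffs_def)
    qed
    then show ?thesis by simp
  qed
  finally show ?thesis using d2 by simp
qed

lemma S_swp: "S (swp c) y x = S c x y"
proof -
  have "(T c x y has_sum S c x y) (UNIV \<times> UNIV) \<longleftrightarrow> ((\<lambda>(i,j). T c x y (j,i)) has_sum S c x y) (UNIV \<times> UNIV)"
    by (rule has_sum_swap)
  have "(\<lambda>(i,j). T c x y (j,i)) = T (swp c) y x" by (auto simp: T_def swp_def fun_eq_iff)
  have "infsum (T c x y) (UNIV \<times> UNIV) = infsum (\<lambda>(i,j). T c x y (j,i)) (UNIV \<times> UNIV)"
  proof (cases "T c x y summable_on UNIV \<times> UNIV")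
    case True
    then show ?thesis using has_sum_swap[of "T c x y"]
      by (metis has_sum_infsum infsumI)
  next
    case False
    then have "\<not> (\<lambda>(i,j). T c x y (j,i)) summable_on UNIV \<times> UNIV" using summable_on_swap by blast
    then show ?thesis using False infsum_not_exists by metis
  qed
  then show ?thesis unfolding S_def
    using \<open>(\<lambda>(i,j). T c x y (j,i)) = T (swp c) y x\<close> by simp
qed

lemma good_swp: "good (swp c) s = good c s"
proof -
  have "T (\<lambda>ij. \<bar>swp c ij\<bar>) t t = (\<lambda>(i,j). T (\<lambda>ij. \<bar>c ij\<bar>) t t (j,i))" for t
    by (auto simp: T_def swp_def fun_eq_iff)
  then show ?thesis unfolding good_def
    using summable_on_swap[of "T (\<lambda>ij. \<bar>c ij\<bar>) _ _" UNIV UNIV] by auto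
qed

lemma swp_swp[simp]: "swp (swp c) = c" by (auto simp: swp_def fun_eq_iff)

lemma good_Dy: "good c s \<Longrightarrow> good (Dy c) s"
  unfolding Dy_def by (simp add: good_swp good_Dx)

lemma deriv_y:
  assumes g: "good c s" and x: "\<bar>x\<bar> < s" and y: "\<bar>y\<bar> < s"
  shows "((\<lambda>t. S c x t) has_real_derivative S (Dy c) x y) (at y)"
proof -
  have "((\<lambda>t. S (swp c) t x) has_real_derivative S (Dx (swp c)) y x) (at y)"
    by (rule deriv_x) (use g x y in \<open>auto simp: good_swp\<close>)
  moreover have "(\<lambda>t. S (swp c) t x) = (\<lambda>t. S c x t)" by (simp add: S_swp)
  moreover have "S (Dx (swp c)) y x = S (Dy c) x y"
    unfolding Dy_def by (metis S_swp swp_swp)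
  ultimately show ?thesis by simp
qed

lemma mvt_bound:
  fixes u v :: "real \<Rightarrow> real"
  assumes der: "\<And>x. \<bar>x\<bar> \<le> \<delta> \<Longrightarrow> (u has_real_derivative v x) (at x)"
    and bd: "\<And>x. \<bar>x\<bar> \<le> \<delta> \<Longrightarrow> \<bar>v x\<bar> \<le> K"
    and u0: "u 0 = 0" and t: "\<bar>t\<bar> \<le> \<delta>"
  shows "\<bar>u t\<bar> \<le> \<delta> * K"
proof (cases "t = 0")
  case True
  have d0: "0 \<le> \<delta>" using t by (meson abs_ge_zero order_trans)
  then have "\<bar>v 0\<bar> \<le> K" using bd[of 0] by simp
  then have "0 \<le> K" by (meson abs_ge_zero order_trans)
  moreover note d0
  ultimately show ?thesis using True u0 by simp
next
  case False
  show ?thesis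
  proof (cases "t > 0")
    case True
    obtain z where z: "0 < z" "z < t" "u t - u 0 = (t - 0) * v z"
      using MVT2[of 0 t u v] der True t by fastforce
    have "\<bar>u t\<bar> = \<bar>t\<bar> * \<bar>v z\<bar>" using z u0 by (simp add: abs_mult)
    also have "\<dots> \<le> \<delta> * K" using t bd[of z] z by (intro mult_mono) auto
    finally show ?thesis .
  next
    case False
    then have tn: "t < 0" using \<open>t \<noteq> 0\<close> by auto
    obtain z where z: "t < z" "z < 0" "u 0 - u t = (0 - t) * v z"
      using MVT2[of t 0 u v] der tn t by fastforce
    have "\<bar>u t\<bar> = \<bar>t\<bar> * \<bar>v z\<bar>" using z u0 by (simp add: abs_mult)
    also have "\<dots> \<le> \<delta> * K" using t bd[of z] z by (intro mult_mono) auto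
    finally show ?thesis .
  qed
qed

lemma gronwall3:
  fixes ua ub uc va vc :: "real \<Rightarrow> real"
  assumes d: "d > 0"
    and d1: "\<And>t. \<bar>t\<bar> < d \<Longrightarrow> (ua has_real_derivative va t) (at t)"
    and d2: "\<And>t. \<bar>t\<bar> < d \<Longrightarrow> (ub has_real_derivative uc t) (at t)"
    and d3: "\<And>t. \<bar>t\<bar> < d \<Longrightarrow> (uc has_real_derivative vc t) (at t)"
    and b1: "\<And>t. \<bar>t\<bar> < d \<Longrightarrow> \<bar>va t\<bar> \<le> L * (\<bar>ua t\<bar> + \<bar>ub t\<bar> + \<bar>uc t\<bar>)"
    and b3: "\<And>t. \<bar>t\<bar> < d \<Longrightarrow> \<bar>vc t\<bar> \<le> L * (\<bar>ua t\<bar> + \<bar>ub t\<bar> + \<bar>uc t\<bar>)"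
    and z: "ua 0 = 0" "ub 0 = 0" "uc 0 = 0"
  shows "\<exists>e>0. \<forall>t. \<bar>t\<bar> < e \<longrightarrow> ua t = 0 \<and> ub t = 0 \<and> uc t = 0"
proof -
  define L' where "L' = max L 1"
  have L': "L' \<ge> 1" "L \<le> L'" by (auto simp: L'_def)
  define \<delta> where "\<delta> = min (d/2) (1 / (6 * L'))"
  have \<delta>: "\<delta> > 0" "\<delta> < d" "3 * \<delta> * L' \<le> 1/2" using d L'
    by (auto simp: \<delta>_def min_def field_simps)
  define Z where "Z t = \<bar>ua t\<bar> + \<bar>ub t\<bar> + \<bar>uc t\<bar>" for t
  have cont: "isCont Z t" if "\<bar>t\<bar> \<le> \<delta>" for t
  proof -
    have "\<bar>t\<bar> < d" using that \<delta> by auto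
    then have "isCont ua t" "isCont ub t" "isCont uc t"
      using d1 d2 d3 DERIV_isCont by blast+
    then show ?thesis unfolding Z_def by (intro continuous_intros)
  qed
  obtain M where M: "\<And>t. -\<delta> \<le> t \<and> t \<le> \<delta> \<Longrightarrow> Z t \<le> M"
    and Mt: "\<exists>t0. -\<delta> \<le> t0 \<and> t0 \<le> \<delta> \<and> Z t0 = M"
    using isCont_eq_Ub[of "-\<delta>" \<delta> Z] cont \<delta> by (auto simp: abs_le_iff)
  have M0: "0 \<le> M" using M[of 0] \<delta> by (auto simp: Z_def)
  have bnd: "Z t \<le> M / 2" if t: "\<bar>t\<bar> \<le> \<delta>" for t
  proof -
    have Zb: "\<And>x. \<bar>x\<bar> \<le> \<delta> \<Longrightarrow> L * Z x \<le> L' * M"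
    proof -
      fix x :: real assume "\<bar>x\<bar> \<le> \<delta>"
      then have "Z x \<le> M" "0 \<le> Z x" using M by (auto simp: Z_def abs_le_iff)
      then show "L * Z x \<le> L' * M" using L' M0
        by (meson dual_order.trans le_cases mult_left_mono mult_right_mono mult_nonneg_nonneg mult_nonpos_nonneg order_trans zero_le_one)
    qed
    have "\<bar>ua t\<bar> \<le> \<delta> * (L' * M)"
    proof (rule mvt_bound[where u=ua and v=va])
      fix x :: real assume x: "\<bar>x\<bar> \<le> \<delta>"
      show "(ua has_real_derivative va x) (at x)" using d1 x \<delta> by auto
      have "\<bar>va x\<bar> \<le> L * Z x" using b1[of x] x \<delta> by (simp add: Z_def)
      also have "\<dots> \<le> L' * M" using Zb x by simp
      finally show "\<bar>va x\<bar> \<le> L' * M" .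
    qed (use z t in auto)
    moreover have "\<bar>uc t\<bar> \<le> \<delta> * (L' * M)"
    proof (rule mvt_bound[where u=uc and v=vc])
      fix x :: real assume x: "\<bar>x\<bar> \<le> \<delta>"
      show "(uc has_real_derivative vc x) (at x)" using d3 x \<delta> by auto
      have "\<bar>vc x\<bar> \<le> L * Z x" using b3[of x] x \<delta> by (simp add: Z_def)
      also have "\<dots> \<le> L' * M" using Zb x by simp
      finally show "\<bar>vc x\<bar> \<le> L' * M" .
    qed (use z t in auto)
    moreover have "\<bar>ub t\<bar> \<le> \<delta> * (L' * M)"
    proof (rule mvt_bound[where u=ub and v=uc])
      fix x :: real assume x: "\<bar>x\<bar> \<le> \<delta>"
      show "(ub has_real_derivative uc x) (at x)" using d2 x \<delta> by auto
      have "\<bar>uc x\<bar> \<le> Z x" by (simp add: Z_def)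
      also have "\<dots> \<le> M" using M x by (auto simp: abs_le_iff)
      also have "\<dots> \<le> L' * M" using L' M0 by (simp add: mult_le_cancel_right1)
      finally show "\<bar>uc x\<bar> \<le> L' * M" .
    qed (use z t in auto)
    ultimately have "Z t \<le> 3 * \<delta> * L' * M" by (simp add: Z_def)
    also have "\<dots> \<le> M / 2" using \<delta> M0 mult_right_mono[OF \<delta>(3) M0] by simp
    finally show ?thesis .
  qed
  have "M \<le> M / 2"
  proof -
    obtain t0 where "-\<delta> \<le> t0" "t0 \<le> \<delta>" "Z t0 = M" using Mt by blast
    then show ?thesis using bnd[of t0] by auto
  qed
  then have M00: "M = 0" using M0 by auto
  have "\<forall>t. \<bar>t\<bar> < \<delta> \<longrightarrow> ua t = 0 \<and> ub t = 0 \<and> uc t = 0"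
  proof (intro allI impI)
    fix t :: real assume "\<bar>t\<bar> < \<delta>"
    then have "Z t \<le> 0" using bnd[of t] M00 by auto
    then show "ua t = 0 \<and> ub t = 0 \<and> uc t = 0" by (auto simp: Z_def)
  qed
  then show ?thesis using \<delta> by blast
qed

definition FF :: "(nat \<times> nat \<Rightarrow> real) \<Rightarrow> nat \<Rightarrow> nat \<Rightarrow> real \<Rightarrow> real \<Rightarrow> real" where
  "FF c a b x y = S ((Dx^^a) ((Dy^^b) c)) x y"

lemma Dx_Dy: "Dx (Dy c) = Dy (Dx c)"
  by (auto simp: Dx_def Dy_def swp_def fun_eq_iff)

lemma Dy_Dxn: "Dy ((Dx^^a) c) = (Dx^^a) (Dy c)"
  by (induction a) (auto simp: Dx_Dy[symmetric])

lemma good_DxDy: "good c s \<Longrightarrow> good ((Dx^^a) ((Dy^^b) c)) s"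
proof -
  assume g: "good c s"
  have "good ((Dy^^b) c) s" by (induction b) (use g good_Dy in auto)
  then show ?thesis by (induction a) (use good_Dx in auto)
qed

lemma FF_dx:
  assumes "good c s" "\<bar>x\<bar> < s" "\<bar>y\<bar> < s"
  shows "((\<lambda>t. FF c a b t y) has_real_derivative FF c (a+1) b x y) (at x)"
  using deriv_x[OF good_DxDy[OF assms(1)] assms(2,3)] by (simp add: FF_def)

lemma FF_dy:
  assumes "good c s" "\<bar>x\<bar> < s" "\<bar>y\<bar> < s"
  shows "((\<lambda>t. FF c a b x t) has_real_derivative FF c a (b+1) x y) (at y)"
  using deriv_y[OF good_DxDy[OF assms(1)] assms(2,3), of a b] by (simp add: FF_def Dy_Dxn)

lemma pdx_transfer:
  assumes g: "good c s" and eq: "\<And>x y. \<bar>x\<bar> < s \<Longrightarrow> \<bar>y\<bar> < s \<Longrightarrow> h (x,y) = FF c a b x y"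
    and x: "\<bar>x\<bar> < s" and y: "\<bar>y\<bar> < s"
  shows "pdx h (x,y) = FF c (a+1) b x y"
proof -
  have "((\<lambda>t. h (t,y)) has_real_derivative FF c (a+1) b x y) (at x)"
  proof (rule has_field_derivative_transform_within_open[OF FF_dx[OF g x y], of "{t. \<bar>t\<bar> < s}"])
    show "open {t::real. \<bar>t\<bar> < s}" by (simp add: open_Collect_less continuous_intros)
  qed (use x y eq in auto)
  then show ?thesis unfolding pdx_def by (simp add: DERIV_imp_deriv)
qed

lemma pdy_transfer:
  assumes g: "good c s" and eq: "\<And>x y. \<bar>x\<bar> < s \<Longrightarrow> \<bar>y\<bar> < s \<Longrightarrow> h (x,y) = FF c a b x y"
    and x: "\<bar>x\<bar> < s" and y: "\<bar>y\<bar> < s"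
  shows "pdy h (x,y) = FF c a (b+1) x y"
proof -
  have "((\<lambda>t. h (x,t)) has_real_derivative FF c a (b+1) x y) (at y)"
  proof (rule has_field_derivative_transform_within_open[OF FF_dy[OF g x y], of "{t. \<bar>t\<bar> < s}"])
    show "open {t::real. \<bar>t\<bar> < s}" by (simp add: open_Collect_less continuous_intros)
  qed (use x y eq in auto)
  then show ?thesis unfolding pdy_def by (simp add: DERIV_imp_deriv)
qed

lemma S_bound:
  assumes g: "good c s" and r: "0 \<le> r" "r < s" and x: "\<bar>x\<bar> \<le> r" and y: "\<bar>y\<bar> \<le> r"
  shows "\<bar>S c x y\<bar> \<le> infsum (T (\<lambda>ij. \<bar>c ij\<bar>) r r) UNIV"
proof -
  have sm: "T (\<lambda>ij. \<bar>c ij\<bar>) r r summable_on UNIV" using g r by (simp add: good_def)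
  have a: "(\<lambda>ij. norm (T c x y ij)) summable_on UNIV"
    using good_abs_summable[OF g] x y r by auto
  have "\<bar>S c x y\<bar> \<le> infsum (\<lambda>ij. norm (T c x y ij)) UNIV"
    unfolding S_def using norm_infsum_bound[of "T c x y" UNIV] a by simp
  also have "\<dots> \<le> infsum (T (\<lambda>ij. \<bar>c ij\<bar>) r r) UNIV"
  proof (rule infsum_mono[OF a sm])
    fix ij :: "nat \<times> nat"
    obtain i j where ij: "ij = (i,j)" by (cases ij)
    have "\<bar>x\<bar>^i \<le> r^i" "\<bar>y\<bar>^j \<le> r^j" using x y by (auto intro: power_mono)
    then have "\<bar>c (i,j)\<bar> * \<bar>x\<bar>^i * \<bar>y\<bar>^j \<le> \<bar>c (i,j)\<bar> * r^i * r^j"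
      using r by (intro mult_mono mult_left_mono) auto
    then show "norm (T c x y ij) \<le> T (\<lambda>ij. \<bar>c ij\<bar>) r r ij"
      by (simp add: T_def ij abs_mult power_abs)
  qed
  finally show ?thesis .
qed

lemma FF_bound:
  assumes g: "good c s" and r: "0 \<le> r" "r < s"
  shows "\<exists>M. \<forall>x y. \<bar>x\<bar> \<le> r \<longrightarrow> \<bar>y\<bar> \<le> r \<longrightarrow> \<bar>FF c a b x y\<bar> \<le> M"
  using S_bound[OF good_DxDy[OF g] r] unfolding FF_def by blast

lemma zero_deriv:
  fixes g g' :: "real \<Rightarrow> real"
  assumes z: "\<And>t. \<bar>t\<bar> < s \<Longrightarrow> g t = 0" and d: "(g has_real_derivative g' x) (at x)"
    and x: "\<bar>x\<bar> < s"
  shows "g' x = 0"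
proof -
  have "((\<lambda>t. 0) has_real_derivative g' x) (at x)"
  proof (rule has_field_derivative_transform_within_open[OF d, of "{t. \<bar>t\<bar> < s}"])
    show "open {t::real. \<bar>t\<bar> < s}" by (simp add: open_Collect_less continuous_intros)
  qed (use x z in auto)
  moreover have "((\<lambda>t. 0) has_real_derivative 0) (at x)" by simp
  ultimately show ?thesis using DERIV_unique by blast
qed

lemma ball_sq:
  assumes "(x,y) \<in> ball (0::real,0::real) e"
  shows "\<bar>x\<bar> < e" "\<bar>y\<bar> < e"
proof -
  have d: "sqrt (x^2 + y^2) < e" using assms by (simp add: dist_Pair_Pair)
  have "\<bar>x\<bar> \<le> sqrt (x^2 + y^2)" using real_sqrt_le_mono[of "x^2" "x^2+y^2"] by simp
  then show "\<bar>x\<bar> < e" using d by linarith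
  have "\<bar>y\<bar> \<le> sqrt (x^2 + y^2)" using real_sqrt_le_mono[of "y^2" "x^2+y^2"] by simp
  then show "\<bar>y\<bar> < e" using d by linarith
qed

lemma sq_ball:
  assumes "\<bar>x\<bar> < e/2" "\<bar>y\<bar> < e/2"
  shows "(x,y) \<in> ball (0::real,0::real) e"
proof -
  have "sqrt (x^2 + y^2) \<le> \<bar>x\<bar> + \<bar>y\<bar>" by (rule sqrt_sum_squares_le_sum_abs)
  then show ?thesis using assms by (simp add: dist_Pair_Pair)
qed

lemma good_mono: "good c s \<Longrightarrow> s' \<le> s \<Longrightarrow> good c s'"
  by (auto simp: good_def)

lemma analytic_at0:
  assumes an: "real_analytic_on2 U g" and o: "(0,0) \<in> U"
  shows "\<exists>s>0. \<exists>c. good c s \<and> (\<forall>x y. \<bar>x\<bar> < s \<longrightarrow> \<bar>y\<bar> < s \<longrightarrow> g (x,y) = FF c 0 0 x y \<and> (x,y) \<in> U)"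
proof -
  obtain r c where r: "r > 0" "ball (0,0) r \<subseteq> U"
    and hs: "\<And>q. q \<in> ball (0,0) r \<Longrightarrow> ((\<lambda>(i,j). c (i,j) * (fst q - 0)^i * (snd q - 0)^j) has_sum g q) UNIV"
    using an o unfolding real_analytic_on2_def by fastforce
  have hs': "(T c x y has_sum g (x,y)) UNIV" if "(x,y) \<in> ball (0,0) r" for x y
  proof -
    have "(\<lambda>(i,j). c (i,j) * (fst (x,y) - 0)^i * (snd (x,y) - 0)^j) = T c x y"
      by (auto simp: T_def fun_eq_iff)
    then show ?thesis using hs[OF that] by simp
  qed
  define s where "s = r / 2"
  have s: "s > 0" using r by (simp add: s_def)
  have gd: "good c s" unfolding good_def
  proof (intro allI impI)
    fix t :: real assume t: "0 \<le> t \<and> t < s"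
    have "(t,t) \<in> ball (0,0) r" by (rule sq_ball) (use t in \<open>auto simp: s_def\<close>)
    then have "T c t t summable_on UNIV" using hs' summable_on_def by blast
    then have "(\<lambda>ij. norm (T c t t ij)) summable_on UNIV"
      using summable_on_iff_abs_summable_on_real by blast
    moreover have "(\<lambda>ij. norm (T c t t ij)) = T (\<lambda>ij. \<bar>c ij\<bar>) t t"
      using t by (auto simp: T_def fun_eq_iff abs_mult)
    ultimately show "T (\<lambda>ij. \<bar>c ij\<bar>) t t summable_on UNIV" by simp
  qed
  have "g (x,y) = FF c 0 0 x y \<and> (x,y) \<in> U" if "\<bar>x\<bar> < s" "\<bar>y\<bar> < s" for x y
  proof -
    have b: "(x,y) \<in> ball (0,0) r" by (rule sq_ball) (use that in \<open>auto simp: s_def\<close>)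
    have "g (x,y) = S c x y" unfolding S_def using hs'[OF b] by (simp add: infsumI)
    then show ?thesis using b r by (simp add: FF_def subset_iff)
  qed
  then show ?thesis using s gd by blast
qed

lemma lin_bound:
  fixes v q p w a1 a2 :: real
  assumes e: "(1 - q^2) * v + q * a1 + p * a2 = 0" and q: "q^2 < 1"
  shows "\<bar>v\<bar> \<le> ((\<bar>a1\<bar> + \<bar>a2\<bar>) / (1 - q^2)) * (\<bar>p\<bar> + \<bar>q\<bar> + \<bar>w\<bar>)"
proof -
  have pos: "0 < 1 - q^2" using q by simp
  have e2: "(1 - q^2) * v = - (q * a1 + p * a2)" using e by linarith
  have "(1 - q^2) * \<bar>v\<bar> = \<bar>(1 - q^2) * v\<bar>" using pos by (simp add: abs_mult)
  also have "\<dots> = \<bar>q * a1 + p * a2\<bar>" by (simp only: e2 abs_minus_cancel)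
  also have "\<dots> \<le> \<bar>q\<bar> * \<bar>a1\<bar> + \<bar>p\<bar> * \<bar>a2\<bar>" by (simp add: abs_mult abs_triangle_ineq[THEN order_trans])
  also have "\<dots> \<le> (\<bar>a1\<bar> + \<bar>a2\<bar>) * (\<bar>p\<bar> + \<bar>q\<bar> + \<bar>w\<bar>)"
    by (simp add: algebra_simps add_increasing add_increasing2 mult_nonneg_nonneg)
  finally have "(1 - q^2) * \<bar>v\<bar> \<le> (\<bar>a1\<bar> + \<bar>a2\<bar>) * (\<bar>p\<bar> + \<bar>q\<bar> + \<bar>w\<bar>)" .
  then show ?thesis using pos by (simp add: field_simps)
qed

lemma bnd4:
  fixes a1 a2 a3 a4 b1 b2 b3 b4 :: real
  assumes "\<bar>a1\<bar> \<le> A1" "\<bar>a2\<bar> \<le> A2" "\<bar>a3\<bar> \<le> A3" "\<bar>a4\<bar> \<le> A4"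
    "\<bar>b1\<bar> \<le> C1" "\<bar>b2\<bar> \<le> C2" "\<bar>b3\<bar> \<le> C3" "\<bar>b4\<bar> \<le> C4"
  shows "\<bar>- (2 * a1 * b1) - 2 * a2 * b2 - 6 * a3 * b3 - 6 * a4 * b4\<bar> \<le> 2 * (A1 * C1) + 2 * (A2 * C2) + 6 * (A3 * C3) + 6 * (A4 * C4)"
proof -
  have m: "\<bar>a * b\<bar> \<le> A * C" if "\<bar>a\<bar> \<le> A" "\<bar>b\<bar> \<le> C" for a b A C :: real
    using that by (simp add: abs_mult mult_mono')
  have h1: "\<bar>a1 * b1\<bar> \<le> A1 * C1" "\<bar>a2 * b2\<bar> \<le> A2 * C2" "\<bar>a3 * b3\<bar> \<le> A3 * C3" "\<bar>a4 * b4\<bar> \<le> A4 * C4"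
    using m assms by auto
  have e: "- (2 * a1 * b1) - 2 * a2 * b2 - 6 * a3 * b3 - 6 * a4 * b4 = - (2 * (a1 * b1)) - 2 * (a2 * b2) - 6 * (a3 * b3) - 6 * (a4 * b4)"
    by (simp add: mult.assoc)
  show ?thesis unfolding e using h1 by linarith
qed

lemma isCont_near0:
  fixes g :: "real \<Rightarrow> real"
  assumes "isCont g 0" "\<epsilon> > 0"
  shows "\<exists>d>0. \<forall>y. \<bar>y\<bar> < d \<longrightarrow> \<bar>g y - g 0\<bar> < \<epsilon>"
proof -
  have "g \<midarrow>0\<rightarrow> g 0" using assms(1) by (simp add: isCont_def)
  then obtain d where d: "d > 0" "\<And>y. y \<noteq> 0 \<and> norm (y - 0) < d \<Longrightarrow> norm (g y - g 0) < \<epsilon>"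
    unfolding LIM_eq using assms(2) by blast
  have "\<forall>y. \<bar>y\<bar> < d \<longrightarrow> \<bar>g y - g 0\<bar> < \<epsilon>"
  proof (intro allI impI)
    fix y :: real assume y: "\<bar>y\<bar> < d"
    show "\<bar>g y - g 0\<bar> < \<epsilon>"
    proof (cases "y = 0")
      case True then show ?thesis using assms(2) by simp
    next
      case False then show ?thesis using d(2)[of y] y by simp
    qed
  qed
  then show ?thesis using d(1) by blast
qed

lemma sign_pos:
  fixes D K x m :: real
  assumes "\<bar>D\<bar> \<le> K" "(K+1) * \<bar>x\<bar> \<le> 6 * m"
  shows "0 \<le> m * x^2 + D/6 * x^3"
proof -
  have K0: "0 \<le> K" using assms(1) by (meson abs_ge_zero order_trans)
  have "\<bar>D/6 * x^3\<bar> = (\<bar>D\<bar> * \<bar>x\<bar>) / 6 * x^2" by (simp add: abs_mult power_abs power2_eq_square power3_eq_cube)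
  also have "\<dots> \<le> (K * \<bar>x\<bar>) / 6 * x^2" using assms(1) by (intro mult_right_mono divide_right_mono mult_right_mono) auto
  also have "\<dots> \<le> m * x^2" using assms(2) by (intro mult_right_mono) (auto simp: algebra_simps)
  finally show ?thesis by linarith
qed

lemma sign_neg:
  fixes D K x m :: real
  assumes "\<bar>D\<bar> \<le> K" "(K+1) * \<bar>x\<bar> \<le> - 6 * m"
  shows "m * x^2 + D/6 * x^3 \<le> 0"
proof -
  have "0 \<le> (-m) * x^2 + (-D)/6 * x^3" by (rule sign_pos) (use assms in auto)
  then show ?thesis by simp
qed

theorem proposition4p1:
  fixes U :: "(real \<times> real) set" and f \<phi> :: "real \<times> real \<Rightarrow> real"
  assumes U_open: "open U" and o_in: "(0,0) \<in> U"
    and f_an: "real_analytic_on2 U f"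
    and f0: "f (0,0) = 0" and fx0: "pdx f (0,0) = 0" and fy0: "pdy f (0,0) = 1"
    and dense: "U \<subseteq> closure {p \<in> U. BF f p \<noteq> 0}"
    and phi_an: "real_analytic_on2 U \<phi>"
    and AB: "\<forall>p\<in>U. AF f p - \<phi> p * (BF f p)^2 = 0"
    and gradB: "pdx (BF f) (0,0) = 0" "pdy (BF f) (0,0) = 0"
  shows "\<exists>\<mu>::real.
           (\<exists>\<epsilon>>0. \<forall>y. \<bar>y\<bar> < \<epsilon> \<longrightarrow>
               deriv (alphaF f) y + (alphaF f y)^2 + \<mu> = 0 \<and>
               deriv (deriv (betaF f)) y + 4 * alphaF f y * deriv (betaF f) y = 0)
         \<and> (\<mu> > 0 \<longrightarrow> (\<exists>e>0. \<forall>p\<in>U \<inter> ball (0,0) e. \<not> BF f p < 0))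
         \<and> (\<mu> < 0 \<longrightarrow> (\<exists>e>0. \<forall>p\<in>U \<inter> ball (0,0) e. \<not> BF f p > 0))
         \<and> (changes_causal_type U f \<longrightarrow> \<mu> = 0)"
proof -
  obtain s1 c where s1: "s1 > 0" and gc1: "good c s1"
    and fc1: "\<And>x y. \<bar>x\<bar> < s1 \<Longrightarrow> \<bar>y\<bar> < s1 \<Longrightarrow> f (x,y) = FF c 0 0 x y \<and> (x,y) \<in> U"
    using analytic_at0[OF f_an o_in] by blast
  obtain s2 e where s2: "s2 > 0" and ge2: "good e s2"
    and pe2: "\<And>x y. \<bar>x\<bar> < s2 \<Longrightarrow> \<bar>y\<bar> < s2 \<Longrightarrow> \<phi> (x,y) = FF e 0 0 x y \<and> (x,y) \<in> U"
    using analytic_at0[OF phi_an o_in] by blast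
  define s where "s = min s1 s2"
  have s: "s > 0" using s1 s2 by (simp add: s_def)
  have gc: "good c s" using good_mono[OF gc1] by (simp add: s_def)
  have ge: "good e s" using good_mono[OF ge2] by (simp add: s_def)
  have f_eq: "\<And>x y. \<bar>x\<bar> < s \<Longrightarrow> \<bar>y\<bar> < s \<Longrightarrow> f (x,y) = FF c 0 0 x y"
    using fc1 by (simp add: s_def)
  have inU: "\<And>x y. \<bar>x\<bar> < s \<Longrightarrow> \<bar>y\<bar> < s \<Longrightarrow> (x,y) \<in> U"
    using fc1 by (simp add: s_def)
  have phi_eq: "\<And>x y. \<bar>x\<bar> < s \<Longrightarrow> \<bar>y\<bar> < s \<Longrightarrow> \<phi> (x,y) = FF e 0 0 x y"
    using pe2 by (simp add: s_def)
  define F where "F = FF c"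
  define H where "H = FF e"
  have dFx: "\<And>a b x y. \<bar>x\<bar> < s \<Longrightarrow> \<bar>y\<bar> < s \<Longrightarrow> ((\<lambda>t. F a b t y) has_real_derivative F (a+1) b x y) (at x)"
    unfolding F_def using FF_dx[OF gc] by blast
  have dFy: "\<And>a b x y. \<bar>x\<bar> < s \<Longrightarrow> \<bar>y\<bar> < s \<Longrightarrow> ((\<lambda>t. F a b x t) has_real_derivative F a (b+1) x y) (at y)"
    unfolding F_def using FF_dy[OF gc] by blast
  have dHx: "\<And>a b x y. \<bar>x\<bar> < s \<Longrightarrow> \<bar>y\<bar> < s \<Longrightarrow> ((\<lambda>t. H a b t y) has_real_derivative H (a+1) b x y) (at x)"
    unfolding H_def using FF_dx[OF ge] by blast
  have dHy: "\<And>a b x y. \<bar>x\<bar> < s \<Longrightarrow> \<bar>y\<bar> < s \<Longrightarrow> ((\<lambda>t. H a b x t) has_real_derivative H a (b+1) x y) (at y)"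
    unfolding H_def using FF_dy[OF ge] by blast
  have fx: "\<And>x y. \<bar>x\<bar> < s \<Longrightarrow> \<bar>y\<bar> < s \<Longrightarrow> pdx f (x,y) = F 1 0 x y"
    using pdx_transfer[OF gc f_eq] unfolding F_def by (simp add: eval_nat_numeral)
  have fy: "\<And>x y. \<bar>x\<bar> < s \<Longrightarrow> \<bar>y\<bar> < s \<Longrightarrow> pdy f (x,y) = F 0 1 x y"
    using pdy_transfer[OF gc f_eq] unfolding F_def by (simp add: eval_nat_numeral)
  have fxx: "\<And>x y. \<bar>x\<bar> < s \<Longrightarrow> \<bar>y\<bar> < s \<Longrightarrow> pdx (pdx f) (x,y) = F 2 0 x y"
    using pdx_transfer[OF gc, of "pdx f" 1 0] fx unfolding F_def by (simp add: eval_nat_numeral)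
  have fxy: "\<And>x y. \<bar>x\<bar> < s \<Longrightarrow> \<bar>y\<bar> < s \<Longrightarrow> pdy (pdx f) (x,y) = F 1 1 x y"
    using pdy_transfer[OF gc, of "pdx f" 1 0] fx unfolding F_def by (simp add: eval_nat_numeral)
  have fyy: "\<And>x y. \<bar>x\<bar> < s \<Longrightarrow> \<bar>y\<bar> < s \<Longrightarrow> pdy (pdy f) (x,y) = F 0 2 x y"
    using pdy_transfer[OF gc, of "pdy f" 0 1] fy unfolding F_def by (simp add: eval_nat_numeral)
  have fxxx: "\<And>x y. \<bar>x\<bar> < s \<Longrightarrow> \<bar>y\<bar> < s \<Longrightarrow> pdx (pdx (pdx f)) (x,y) = F 3 0 x y"
    using pdx_transfer[OF gc, of "pdx (pdx f)" 2 0] fxx unfolding F_def by (simp add: eval_nat_numeral)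
  have BF_eq: "\<And>x y. \<bar>x\<bar> < s \<Longrightarrow> \<bar>y\<bar> < s \<Longrightarrow> BF f (x,y) = 1 - F 1 0 x y ^ 2 - F 0 1 x y ^ 2"
    by (simp add: BF_def fx fy)
  define \<Phi>0 where "\<Phi>0 = (\<lambda>x y. (1 - F 1 0 x y ^ 2) * F 0 2 x y + 2 * F 1 0 x y * F 0 1 x y * F 1 1 x y + (1 - F 0 1 x y ^ 2) * F 2 0 x y - H 0 0 x y * (1 - F 1 0 x y ^ 2 - F 0 1 x y ^ 2) ^ 2)"
  define \<Phi>1 where "\<Phi>1 = (\<lambda>x y. (F 1 2 x y + F 3 0 x y - H 1 0 x y - F 0 1 x y * F 0 1 x y * F 3 0 x y + 2 * F 0 1 x y * F 0 1 x y * H 1 0 x y + 2 * F 0 1 x y * F 1 0 x y * F 2 1 x y + 4 * F 0 1 x y * F 1 1 x y * H 0 0 x y - 2 * F 0 2 x y * F 1 0 x y * F 2 0 x y - F 1 0 x y * F 1 0 x y * F 1 2 x y + 2 * F 1 0 x y * F 1 0 x y * H 1 0 x y + 2 * F 1 0 x y * F 1 1 x y * F 1 1 x y + 4 * F 1 0 x y * F 2 0 x y * H 0 0 x y - F 0 1 x y * F 0 1 x y * F 0 1 x y * F 0 1 x y * H 1 0 x y - 4 * F 0 1 x y * F 0 1 x y * F 0 1 x y * F 1 1 x y * H 0 0 x y - 2 * F 0 1 x y * F 0 1 x y * F 1 0 x y * F 1 0 x y * H 1 0 x y - 4 * F 0 1 x y * F 0 1 x y * F 1 0 x y * F 2 0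 x y * H 0 0 x y - 4 * F 0 1 x y * F 1 0 x y * F 1 0 x y * F 1 1 x y * H 0 0 x y - F 1 0 x y * F 1 0 x y * F 1 0 x y * F 1 0 x y * H 1 0 x y - 4 * F 1 0 x y * F 1 0 x y * F 1 0 x y * F 2 0 x y * H 0 0 x y))"
  define \<Phi>2 where "\<Phi>2 = (\<lambda>x y. (F 2 2 x y + F 4 0 x y - H 2 0 x y - F 0 1 x y * F 0 1 x y * F 4 0 x y + 2 * F 0 1 x y * F 0 1 x y * H 2 0 x y + 2 * F 0 1 x y * F 1 0 x y * F 3 1 x y - 2 * F 0 1 x y * F 1 1 x y * F 3 0 x y + 8 * F 0 1 x y * F 1 1 x y * H 1 0 x y + 2 * F 0 1 x y * F 2 0 x y * F 2 1 x y + 4 * F 0 1 x y * F 2 1 x y * H 0 0 x y - 2 * F 0 2 x y * F 1 0 x y * F 3 0 x y - 2 * F 0 2 x y * F 2 0 x y * F 2 0 x y - F 1 0 x y * F 1 0 x y * F 2 2 x y + 2 * F 1 0 x y * F 1 0 x y * H 2 0 x y + 6 * F 1 0 x y * F 1 1 x y * F 2 1 x y - 4 * F 1 0 x y * F 1 2 x y * F 2 0 x y + 8 * F 1 0 x y * F 2 0 x y * H 1 0 x y + 4 * F 1 0 x y * F 3 0 x y * H 0 0 x y + 2 * F 1 1 x y * F 1 1 x y * F 2 0 x y + 4 * F 1 1 x y * F 1 1 x y * H 0 0 x y + 4 * F 2 0 x y * F 2 0 x y * H 0 0 x y - F 0 1 x y * F 0 1 x y * F 0 1 x y * F 0 1 x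 y * H 2 0 x y - 8 * F 0 1 x y * F 0 1 x y * F 0 1 x y * F 1 1 x y * H 1 0 x y - 4 * F 0 1 x y * F 0 1 x y * F 0 1 x y * F 2 1 x y * H 0 0 x y - 2 * F 0 1 x y * F 0 1 x y * F 1 0 x y * F 1 0 x y * H 2 0 x y - 8 * F 0 1 x y * F 0 1 x y * F 1 0 x y * F 2 0 x y * H 1 0 x y - 4 * F 0 1 x y * F 0 1 x y * F 1 0 x y * F 3 0 x y * H 0 0 x y - 12 * F 0 1 x y * F 0 1 x y * F 1 1 x y * F 1 1 x y * H 0 0 x y - 4 * F 0 1 x y * F 0 1 x y * F 2 0 x y * F 2 0 x y * H 0 0 x y - 8 * F 0 1 x y * F 1 0 x y * F 1 0 x y * F 1 1 x y * H 1 0 x y - 4 * F 0 1 x y * F 1 0 x y * F 1 0 x y * F 2 1 x y * H 0 0 x y - 16 * F 0 1 x y * F 1 0 x y * F 1 1 x y * F 2 0 x y * H 0 0 x y - F 1 0 x y * F 1 0 x y * F 1 0 x y * F 1 0 x y * H 2 0 x y - 8 * F 1 0 x y * F 1 0 x y * F 1 0 x y * F 2 0 x y * H 1 0 x y - 4 * F 1 0 x y * F 1 0 x y * F 1 0 x y * F 3 0 x y * H 0 0 x y - 4 * F 1 0 x y * F 1 0 x y * F 1 1 x y * F 1 1 x y * H 0 0 x y - 12 * F 1 0 x y * F 1 0 x y * F 2 0 x y * F 2 0 x y * H 0 0 x y))"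
  define \<Phi>3 where "\<Phi>3 = (\<lambda>x y. (F 3 2 x y + F 5 0 x y - H 3 0 x y - F 0 1 x y * F 0 1 x y * F 5 0 x y + 2 * F 0 1 x y * F 0 1 x y * H 3 0 x y + 2 * F 0 1 x y * F 1 0 x y * F 4 1 x y - 4 * F 0 1 x y * F 1 1 x y * F 4 0 x y + 12 * F 0 1 x y * F 1 1 x y * H 2 0 x y + 4 * F 0 1 x y * F 2 0 x y * F 3 1 x y + 12 * F 0 1 x y * F 2 1 x y * H 1 0 x y + 4 * F 0 1 x y * F 3 1 x y * H 0 0 x y - 2 * F 0 2 x y * F 1 0 x y * F 4 0 x y - 6 * F 0 2 x y * F 2 0 x y * F 3 0 x y - F 1 0 x y * F 1 0 x y * F 3 2 x y + 2 * F 1 0 x y * F 1 0 x y * H 3 0 x y + 8 * F 1 0 x y * F 1 1 x y * F 3 1 x y - 6 * F 1 0 x y * F 1 2 x y * F 3 0 x y - 6 * F 1 0 x y * F 2 0 x y * F 2 2 x y + 12 * F 1 0 x y * F 2 0 x y * H 2 0 x y + 6 * F 1 0 x y * F 2 1 x y * F 2 1 x y + 12 * F 1 0 x y * F 3 0 x y * H 1 0 x y + 4 * F 1 0 x y * F 4 0 x y * H 0 0 x y + 12 * F 1 1 x y * F 1 1 x y * H 1 0 x y + 12 * F 1 1 x y * F 2 0 x y * F 2 1 x y + 12 * F 1 1 x y * F 2 1 x y * H 0 0 x y - 6 * F 1 2 x y * F 2 0 x y * F 2 0 x y + 12 * F 2 0 x y * F 2 0 x y * H 1 0 x y + 12 *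 F 2 0 x y * F 3 0 x y * H 0 0 x y - F 0 1 x y * F 0 1 x y * F 0 1 x y * F 0 1 x y * H 3 0 x y - 12 * F 0 1 x y * F 0 1 x y * F 0 1 x y * F 1 1 x y * H 2 0 x y - 12 * F 0 1 x y * F 0 1 x y * F 0 1 x y * F 2 1 x y * H 1 0 x y - 4 * F 0 1 x y * F 0 1 x y * F 0 1 x y * F 3 1 x y * H 0 0 x y - 2 * F 0 1 x y * F 0 1 x y * F 1 0 x y * F 1 0 x y * H 3 0 x y - 12 * F 0 1 x y * F 0 1 x y * F 1 0 x y * F 2 0 x y * H 2 0 x y - 12 * F 0 1 x y * F 0 1 x y * F 1 0 x y * F 3 0 x y * H 1 0 x y - 4 * F 0 1 x y * F 0 1 x y * F 1 0 x y * F 4 0 x y * H 0 0 x y - 36 * F 0 1 x y * F 0 1 x y * F 1 1 x y * F 1 1 x y * H 1 0 x y - 36 * F 0 1 x y * F 0 1 x y * F 1 1 x y * F 2 1 x y * H 0 0 x y - 12 * F 0 1 x y * F 0 1 x y * F 2 0 x y * F 2 0 x y * H 1 0 x y - 12 * F 0 1 x y * F 0 1 x y * F 2 0 x y * F 3 0 x y * H 0 0 x y - 12 * F 0 1 x y * F 1 0 x y * F 1 0 x y * F 1 1 x y * H 2 0 x y - 12 * F 0 1 x y * F 1 0 x y * F 1 0 x y * F 2 1 x y * H 1 0 x y - 4 * F 0 1 x y * F 1 0 x y * F 1 0 x y * F 3 1 x y * H 0 0 x y - 48 * F 0 1 x y * F 1 0 x y * F 1 1 x y * F 2 0 x y * H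 1 0 x y - 24 * F 0 1 x y * F 1 0 x y * F 1 1 x y * F 3 0 x y * H 0 0 x y - 24 * F 0 1 x y * F 1 0 x y * F 2 0 x y * F 2 1 x y * H 0 0 x y - 24 * F 0 1 x y * F 1 1 x y * F 1 1 x y * F 1 1 x y * H 0 0 x y - 24 * F 0 1 x y * F 1 1 x y * F 2 0 x y * F 2 0 x y * H 0 0 x y - F 1 0 x y * F 1 0 x y * F 1 0 x y * F 1 0 x y * H 3 0 x y - 12 * F 1 0 x y * F 1 0 x y * F 1 0 x y * F 2 0 x y * H 2 0 x y - 12 * F 1 0 x y * F 1 0 x y * F 1 0 x y * F 3 0 x y * H 1 0 x y - 4 * F 1 0 x y * F 1 0 x y * F 1 0 x y * F 4 0 x y * H 0 0 x y - 12 * F 1 0 x y * F 1 0 x y * F 1 1 x y * F 1 1 x y * H 1 0 x y - 12 * F 1 0 x y * F 1 0 x y * F 1 1 x y * F 2 1 x y * H 0 0 x y - 36 * F 1 0 x y * F 1 0 x y * F 2 0 x y * F 2 0 x y * H 1 0 x y - 36 * F 1 0 x y * F 1 0 x y * F 2 0 x y * F 3 0 x y * H 0 0 x y - 24 * F 1 0 x y * F 1 1 x y * F 1 1 x y * F 2 0 x y * H 0 0 x y - 24 * F 1 0 x y * F 2 0 x y * F 2 0 x y * F 2 0 x y * H 0 0 x y))"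
  have Z0: "\<And>x y. \<bar>x\<bar> < s \<Longrightarrow> \<bar>y\<bar> < s \<Longrightarrow> \<Phi>0 x y = 0"
  proof -
    fix x y :: real assume xy: "\<bar>x\<bar> < s" "\<bar>y\<bar> < s"
    have "AF f (x,y) - \<phi> (x,y) * (BF f (x,y))^2 = 0" using AB inU[OF xy] by blast
    then show "\<Phi>0 x y = 0" using xy
      by (simp add: \<Phi>0_def AF_def BF_eq fx fy fxx fxy fyy phi_eq H_def)
  qed
  have D0: "((\<lambda>t. \<Phi>0 t y) has_real_derivative \<Phi>1 x y) (at x)" if xy: "\<bar>x\<bar> < s" "\<bar>y\<bar> < s" for x y
  proof -
    have dF: "\<And>a b. ((\<lambda>t. F a b t y) has_real_derivative F (a+1) b x y) (at x)" using dFx xy by blast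
    have dH: "\<And>a b. ((\<lambda>t. H a b t y) has_real_derivative H (a+1) b x y) (at x)" using dHx xy by blast
    show ?thesis unfolding \<Phi>0_def \<Phi>1_def
      apply (rule derivative_eq_intros dF dH refl)+
      apply (simp add: algebra_simps power2_eq_square eval_nat_numeral)
      done
  qed
  have D1: "((\<lambda>t. \<Phi>1 t y) has_real_derivative \<Phi>2 x y) (at x)" if xy: "\<bar>x\<bar> < s" "\<bar>y\<bar> < s" for x y
  proof -
    have dF: "\<And>a b. ((\<lambda>t. F a b t y) has_real_derivative F (a+1) b x y) (at x)" using dFx xy by blast
    have dH: "\<And>a b. ((\<lambda>t. H a b t y) has_real_derivative H (a+1) b x y) (at x)" using dHx xy by blast
    show ?thesis unfolding \<Phi>1_def \<Phi>2_def
      apply (rule derivative_eq_intros dF dH refl)+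
      apply (simp add: algebra_simps power2_eq_square eval_nat_numeral)
      done
  qed
  have D2: "((\<lambda>t. \<Phi>2 t y) has_real_derivative \<Phi>3 x y) (at x)" if xy: "\<bar>x\<bar> < s" "\<bar>y\<bar> < s" for x y
  proof -
    have dF: "\<And>a b. ((\<lambda>t. F a b t y) has_real_derivative F (a+1) b x y) (at x)" using dFx xy by blast
    have dH: "\<And>a b. ((\<lambda>t. H a b t y) has_real_derivative H (a+1) b x y) (at x)" using dHx xy by blast
    show ?thesis unfolding \<Phi>2_def \<Phi>3_def
      apply (rule derivative_eq_intros dF dH refl)+
      apply (simp add: algebra_simps power2_eq_square eval_nat_numeral)
      done
  qed
  have Z1: "\<Phi>1 x y = 0" if xy: "\<bar>x\<bar> < s" "\<bar>y\<bar> < s" for x y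
    by (rule zero_deriv[where g="\<lambda>t. \<Phi>0 t y" and g'="\<lambda>t. \<Phi>1 t y" and x=x and s=s, OF _ D0[OF xy]]) (use Z0 xy in auto)
  have Z2: "\<Phi>2 x y = 0" if xy: "\<bar>x\<bar> < s" "\<bar>y\<bar> < s" for x y
    by (rule zero_deriv[where g="\<lambda>t. \<Phi>1 t y" and g'="\<lambda>t. \<Phi>2 t y" and x=x and s=s, OF _ D1[OF xy]]) (use Z1 xy in auto)
  have Z3: "\<Phi>3 x y = 0" if xy: "\<bar>x\<bar> < s" "\<bar>y\<bar> < s" for x y
    by (rule zero_deriv[where g="\<lambda>t. \<Phi>2 t y" and g'="\<lambda>t. \<Phi>3 t y" and x=x and s=s, OF _ D2[OF xy]]) (use Z2 xy in auto)

  have open_s: "open {t::real. \<bar>t\<bar> < s}" by (simp add: open_Collect_less continuous_intros)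
  have F10_00: "F 1 0 0 0 = 0" using fx0 fx[of 0 0] s by simp
  have F01_00: "F 0 1 0 0 = 1" using fy0 fy[of 0 0] s by simp
  have F11_00: "F 1 1 0 0 = 0"
  proof -
    have d: "((\<lambda>t. 1 - F 1 0 t 0 ^ 2 - F 0 1 t 0 ^ 2) has_real_derivative
        (- (2 * F 1 0 0 0 * F 2 0 0 0) - 2 * F 0 1 0 0 * F 1 1 0 0)) (at 0)"
    proof -
      have dF: "\<And>a b. ((\<lambda>t. F a b t 0) has_real_derivative F (a+1) b 0 0) (at 0)" using dFx s by simp
      show ?thesis
        apply (rule derivative_eq_intros dF refl)+
        apply (simp add: algebra_simps power2_eq_square eval_nat_numeral)
        done
    qed
    have "((\<lambda>t. BF f (t, 0)) has_real_derivative
        (- (2 * F 1 0 0 0 * F 2 0 0 0) - 2 * F 0 1 0 0 * F 1 1 0 0)) (at 0)"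
      by (rule has_field_derivative_transform_within_open[OF d open_s]) (use s BF_eq in auto)
    then have "pdx (BF f) (0,0) = - (2 * F 1 0 0 0 * F 2 0 0 0) - 2 * F 0 1 0 0 * F 1 1 0 0"
      unfolding pdx_def by (simp add: DERIV_imp_deriv)
    then show ?thesis using gradB(1) F10_00 F01_00 by simp
  qed
  have F02_00: "F 0 2 0 0 = 0"
  proof -
    have d: "((\<lambda>t. 1 - F 1 0 0 t ^ 2 - F 0 1 0 t ^ 2) has_real_derivative
        (- (2 * F 1 0 0 0 * F 1 1 0 0) - 2 * F 0 1 0 0 * F 0 2 0 0)) (at 0)"
    proof -
      have dF: "\<And>a b. ((\<lambda>t. F a b 0 t) has_real_derivative F a (b+1) 0 0) (at 0)" using dFy s by simp
      show ?thesis
        apply (rule derivative_eq_intros dF refl)+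
        apply (simp add: algebra_simps power2_eq_square eval_nat_numeral)
        done
    qed
    have "((\<lambda>t. BF f (0, t)) has_real_derivative
        (- (2 * F 1 0 0 0 * F 1 1 0 0) - 2 * F 0 1 0 0 * F 0 2 0 0)) (at 0)"
      by (rule has_field_derivative_transform_within_open[OF d open_s]) (use s BF_eq in auto)
    then have "pdy (BF f) (0,0) = - (2 * F 1 0 0 0 * F 1 1 0 0) - 2 * F 0 1 0 0 * F 0 2 0 0"
      unfolding pdy_def by (simp add: DERIV_imp_deriv)
    then show ?thesis using gradB(2) F10_00 F01_00 by simp
  qed

  define P where "P = (\<lambda>y. F 0 1 0 y - 1)"
  define Q where "Q = (\<lambda>y. F 1 0 0 y)"
  define a1 where "a1 = (\<lambda>y. (2 * F 1 1 0 y + 2 * F 1 1 0 y * (F 0 1 0 y - 1) - 4 * H 0 0 0 y * (F 0 1 0 y - 1) * F 1 0 0 y - 2 * H 0 0 0 y * (F 0 1 0 y - 1) * (F 0 1 0 y - 1) * F 1 0 0 y - H 0 0 0 y * F 1 0 0 y * F 1 0 0 y * F 1 0 0 y))"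
  define a2 where "a2 = (\<lambda>y. (- 2 * F 2 0 0 y - F 2 0 0 y * (F 0 1 0 y - 1) - 4 * H 0 0 0 y * (F 0 1 0 y - 1) - 4 * H 0 0 0 y * (F 0 1 0 y - 1) * (F 0 1 0 y - 1) - H 0 0 0 y * (F 0 1 0 y - 1) * (F 0 1 0 y - 1) * (F 0 1 0 y - 1)))"
  define b1 where "b1 = (\<lambda>y. (2 * F 2 1 0 y - 2 * F 0 2 0 y * F 2 0 0 y + 2 * F 1 1 0 y * F 1 1 0 y + 2 * F 2 1 0 y * (F 0 1 0 y - 1) - 4 * F 1 1 0 y * H 0 0 0 y * F 1 0 0 y - 8 * F 2 0 0 y * H 0 0 0 y * (F 0 1 0 y - 1) - 4 * H 1 0 0 y * (F 0 1 0 y - 1) * F 1 0 0 y - 4 * F 1 1 0 y * H 0 0 0 y * (F 0 1 0 y - 1) * F 1 0 0 y - 4 * F 2 0 0 y * H 0 0 0 y * (F 0 1 0 y - 1) * (F 0 1 0 y - 1) - 4 * F 2 0 0 y * H 0 0 0 y * F 1 0 0 y * F 1 0 0 y - 2 * H 1 0 0 y * (F 0 1 0 y - 1) * (F 0 1 0 y - 1) * F 1 0 0 y - H 1 0 0 y * F 1 0 0 y * F 1 0 0 y * F 1 0 0 y))"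
  define b2 where "b2 = (\<lambda>y. (- 2 * F 3 0 0 y - 8 * F 1 1 0 y * H 0 0 0 y - F 3 0 0 y * (F 0 1 0 y - 1) - 4 * H 1 0 0 y * (F 0 1 0 y - 1) - 12 * F 1 1 0 y * H 0 0 0 y * (F 0 1 0 y - 1) - 4 * H 1 0 0 y * (F 0 1 0 y - 1) * (F 0 1 0 y - 1) - 4 * F 1 1 0 y * H 0 0 0 y * (F 0 1 0 y - 1) * (F 0 1 0 y - 1) - H 1 0 0 y * (F 0 1 0 y - 1) * (F 0 1 0 y - 1) * (F 0 1 0 y - 1)))"
  have I0: "(1 - Q y ^ 2) * F 0 2 0 y + Q y * a1 y + P y * a2 y = 0" if y: "\<bar>y\<bar> < s" for y
  proof -
    have "\<Phi>0 0 y = (1 - Q y ^ 2) * F 0 2 0 y + Q y * a1 y + P y * a2 y"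
      by (simp add: \<Phi>0_def P_def Q_def a1_def a2_def algebra_simps power2_eq_square eval_nat_numeral)
    then show ?thesis using Z0[of 0 y] y s by simp
  qed
  have I1: "(1 - Q y ^ 2) * F 1 2 0 y + Q y * b1 y + P y * b2 y = 0" if y: "\<bar>y\<bar> < s" for y
  proof -
    have "\<Phi>1 0 y = (1 - Q y ^ 2) * F 1 2 0 y + Q y * b1 y + P y * b2 y"
      by (simp add: \<Phi>1_def P_def Q_def b1_def b2_def algebra_simps power2_eq_square eval_nat_numeral)
    then show ?thesis using Z1[of 0 y] y s by simp
  qed
  have isC: "isCont (\<lambda>y. F a b 0 y) 0" for a b using DERIV_isCont[OF dFy[of 0 0 a b]] s by simp
  have isH: "isCont (\<lambda>y. H a b 0 y) 0" for a b using DERIV_isCont[OF dHy[of 0 0 a b]] s by simp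
  define k1 where "k1 = (\<lambda>y. (\<bar>a1 y\<bar> + \<bar>a2 y\<bar>) / (1 - Q y ^ 2))"
  define k3 where "k3 = (\<lambda>y. (\<bar>b1 y\<bar> + \<bar>b2 y\<bar>) / (1 - Q y ^ 2))"
  have ck1: "isCont k1 0" unfolding k1_def a1_def a2_def Q_def
    apply (intro continuous_intros isC isH)
    using F10_00 apply simp
    done
  have ck3: "isCont k3 0" unfolding k3_def b1_def b2_def Q_def
    apply (intro continuous_intros isC isH)
    using F10_00 apply simp
    done
  have cQ: "isCont Q 0" unfolding Q_def by (rule isC)
  obtain d1 where d1: "d1 > 0" "\<And>y. \<bar>y\<bar> < d1 \<Longrightarrow> \<bar>k1 y - k1 0\<bar> < 1"
    using isCont_near0[OF ck1, of 1] by auto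
  obtain d3 where d3: "d3 > 0" "\<And>y. \<bar>y\<bar> < d3 \<Longrightarrow> \<bar>k3 y - k3 0\<bar> < 1"
    using isCont_near0[OF ck3, of 1] by auto
  obtain d2 where d2: "d2 > 0" "\<And>y. \<bar>y\<bar> < d2 \<Longrightarrow> \<bar>Q y - Q 0\<bar> < 1/2"
    using isCont_near0[OF cQ, of "1/2"] by auto
  have Q00: "Q 0 = 0" using F10_00 by (simp add: Q_def)
  define d where "d = min s (min d1 (min d2 d3))"
  have d: "d > 0" using s d1 d2 d3 by (simp add: d_def)
  define L where "L = \<bar>k1 0\<bar> + \<bar>k3 0\<bar> + 1"
  have Qsq: "Q y ^ 2 < 1" if "\<bar>y\<bar> < d" for y
  proof -
    have "\<bar>Q y\<bar> < 1/2" using d2(2)[of y] that Q00 by (simp add: d_def)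
    then have "\<bar>Q y\<bar> ^ 2 < 1 ^ 2" by (intro power_strict_mono) auto
    then show ?thesis by simp
  qed
  have dP: "(P has_real_derivative F 0 2 0 y) (at y)" if "\<bar>y\<bar> < s" for y
  proof -
    have "((\<lambda>t. F 0 1 0 t) has_real_derivative F 0 2 0 y) (at y)" using dFy[of 0 y 0 1] that s by (simp add: eval_nat_numeral)
    then have "((\<lambda>t. F 0 1 0 t - 1) has_real_derivative F 0 2 0 y - 0) (at y)"
      by (rule DERIV_diff) simp
    then show ?thesis by (simp add: P_def)
  qed
  have dQ: "(Q has_real_derivative F 1 1 0 y) (at y)" if "\<bar>y\<bar> < s" for y
    using dFy[of 0 y 1 0] that s by (simp add: Q_def eval_nat_numeral)
  have dR: "((\<lambda>t. F 1 1 0 t) has_real_derivative F 1 2 0 y) (at y)" if "\<bar>y\<bar> < s" for y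
    using dFy[of 0 y 1 1] that s by (simp add: eval_nat_numeral)
  have Znn: "0 \<le> \<bar>P y\<bar> + \<bar>Q y\<bar> + \<bar>F 1 1 0 y\<bar>" for y by simp
  obtain e1 where e1: "e1 > 0" "\<And>t. \<bar>t\<bar> < e1 \<Longrightarrow> P t = 0 \<and> Q t = 0 \<and> F 1 1 0 t = 0"
  proof -
    have "\<exists>e>0. \<forall>t. \<bar>t\<bar> < e \<longrightarrow> P t = 0 \<and> Q t = 0 \<and> F 1 1 0 t = 0"
    proof (rule gronwall3[where ua=P and ub=Q and uc="\<lambda>t. F 1 1 0 t" and va="\<lambda>t. F 0 2 0 t" and vc="\<lambda>t. F 1 2 0 t" and d=d and L=L])
      fix t :: real assume t: "\<bar>t\<bar> < d"
      have ts: "\<bar>t\<bar> < s" using t by (simp add: d_def)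
      show "(P has_real_derivative F 0 2 0 t) (at t)" using dP ts by blast
      show "(Q has_real_derivative F 1 1 0 t) (at t)" using dQ ts by blast
      show "((\<lambda>t. F 1 1 0 t) has_real_derivative F 1 2 0 t) (at t)" using dR ts by blast
      have "\<bar>F 0 2 0 t\<bar> \<le> k1 t * (\<bar>P t\<bar> + \<bar>Q t\<bar> + \<bar>F 1 1 0 t\<bar>)"
        unfolding k1_def by (rule lin_bound[OF I0[OF ts] Qsq[OF t]])
      also have "\<dots> \<le> L * (\<bar>P t\<bar> + \<bar>Q t\<bar> + \<bar>F 1 1 0 t\<bar>)"
      proof (rule mult_right_mono[OF _ Znn])
        show "k1 t \<le> L" using d1(2)[of t] t by (simp add: d_def L_def)
      qed
      finally show "\<bar>F 0 2 0 t\<bar> \<le> L * (\<bar>P t\<bar> + \<bar>Q t\<bar> + \<bar>F 1 1 0 t\<bar>)" .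
      have "\<bar>F 1 2 0 t\<bar> \<le> k3 t * (\<bar>P t\<bar> + \<bar>Q t\<bar> + \<bar>F 1 1 0 t\<bar>)"
        unfolding k3_def by (rule lin_bound[OF I1[OF ts] Qsq[OF t]])
      also have "\<dots> \<le> L * (\<bar>P t\<bar> + \<bar>Q t\<bar> + \<bar>F 1 1 0 t\<bar>)"
      proof (rule mult_right_mono[OF _ Znn])
        show "k3 t \<le> L" using d3(2)[of t] t by (simp add: d_def L_def)
      qed
      finally show "\<bar>F 1 2 0 t\<bar> \<le> L * (\<bar>P t\<bar> + \<bar>Q t\<bar> + \<bar>F 1 1 0 t\<bar>)" .
    qed (use d F01_00 Q00 F11_00 in \<open>auto simp: P_def\<close>)
    then show ?thesis using that by blast
  qed

  define \<epsilon> where "\<epsilon> = min e1 s"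
  have \<epsilon>: "\<epsilon> > 0" "\<epsilon> \<le> s" using e1 s by (auto simp: \<epsilon>_def)
  have lineP: "\<And>t. \<bar>t\<bar> < \<epsilon> \<Longrightarrow> P t = 0" and lineQ: "\<And>t. \<bar>t\<bar> < \<epsilon> \<Longrightarrow> Q t = 0"
    and lineR: "\<And>t. \<bar>t\<bar> < \<epsilon> \<Longrightarrow> F 1 1 0 t = 0"
    using e1(2) by (auto simp: \<epsilon>_def)
  have L01: "F 0 1 0 y = 1" if "\<bar>y\<bar> < \<epsilon>" for y using lineP[OF that] by (simp add: P_def)
  have L10: "F 1 0 0 y = 0" if "\<bar>y\<bar> < \<epsilon>" for y using lineQ[OF that] by (simp add: Q_def)
  have L11: "F 1 1 0 y = 0" if "\<bar>y\<bar> < \<epsilon>" for y using lineR[OF that] .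
  have L02: "F 0 2 0 y = 0" if y: "\<bar>y\<bar> < \<epsilon>" for y
    by (rule zero_deriv[where g=P and g'="\<lambda>t. F 0 2 0 t" and x=y and s=\<epsilon>, OF lineP dP])
      (use y \<epsilon> in auto)
  have L12: "F 1 2 0 y = 0" if y: "\<bar>y\<bar> < \<epsilon>" for y
    by (rule zero_deriv[where g="\<lambda>t. F 1 1 0 t" and g'="\<lambda>t. F 1 2 0 t" and x=y and s=\<epsilon>, OF lineR dR])
      (use y \<epsilon> in auto)
  have E2: "F 2 2 0 y + 2 * F 2 0 0 y * F 2 1 0 y = 0" if y: "\<bar>y\<bar> < \<epsilon>" for y
  proof -
    have "\<Phi>2 0 y = F 2 2 0 y + 2 * F 2 0 0 y * F 2 1 0 y"
      using L01[OF y] L10[OF y] L11[OF y] L02[OF y] L12[OF y] by (simp add: \<Phi>2_def algebra_simps)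
    then show ?thesis using Z2[of 0 y] y \<epsilon> s by simp
  qed
  have E3: "F 3 2 0 y + 4 * F 2 0 0 y * F 3 1 0 y = 0" if y: "\<bar>y\<bar> < \<epsilon>" for y
  proof -
    have "\<Phi>3 0 y = F 3 2 0 y + 4 * F 2 0 0 y * F 3 1 0 y"
      using L01[OF y] L10[OF y] L11[OF y] L02[OF y] L12[OF y] by (simp add: \<Phi>3_def algebra_simps)
    then show ?thesis using Z3[of 0 y] y \<epsilon> s by simp
  qed
  define w where "w = (\<lambda>y. F 2 1 0 y + F 2 0 0 y ^ 2)"
  have dw: "(w has_real_derivative 0) (at y)" if y: "\<bar>y\<bar> < \<epsilon>" for y
  proof -
    have ys: "\<bar>y\<bar> < s" using y \<epsilon> by simp
    have dF: "\<And>a b. ((\<lambda>t. F a b 0 t) has_real_derivative F a (b+1) 0 y) (at y)" using dFy ys s by simp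
    have "(w has_real_derivative F 2 2 0 y + 2 * F 2 0 0 y * F 2 1 0 y) (at y)"
      unfolding w_def
      apply (rule derivative_eq_intros dF refl)+
      apply (simp add: algebra_simps power2_eq_square eval_nat_numeral)
      done
    then show ?thesis using E2[OF y] by simp
  qed
  have wc: "w y = w 0" if y: "\<bar>y\<bar> < \<epsilon>" for y
    by (rule DERIV_isconst3[of "-\<epsilon>" \<epsilon>]) (use y \<epsilon> dw in auto)
  define \<mu> where "\<mu> = - w 0"
  have alpha_eq: "alphaF f t = F 2 0 0 t" if "\<bar>t\<bar> < s" for t
    using fxx[of 0 t] that s by (simp add: alphaF_def)
  have beta_eq: "betaF f t = F 3 0 0 t / 2" if "\<bar>t\<bar> < s" for t
    using fxxx[of 0 t] that s by (simp add: betaF_def)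
  have dalpha: "deriv (alphaF f) y = F 2 1 0 y" if y: "\<bar>y\<bar> < s" for y
  proof -
    have "((\<lambda>t. F 2 0 0 t) has_real_derivative F 2 1 0 y) (at y)" using dFy[of 0 y 2 0] y s by simp
    then have "(alphaF f has_real_derivative F 2 1 0 y) (at y)"
      by (rule has_field_derivative_transform_within_open[OF _ open_s]) (use y alpha_eq in auto)
    then show ?thesis by (rule DERIV_imp_deriv)
  qed
  have dbeta: "deriv (betaF f) y = F 3 1 0 y / 2" if y: "\<bar>y\<bar> < s" for y
  proof -
    have "((\<lambda>t. F 3 0 0 t) has_real_derivative F 3 1 0 y) (at y)" using dFy[of 0 y 3 0] y s by simp
    then have "((\<lambda>t. F 3 0 0 t / 2) has_real_derivative F 3 1 0 y / 2) (at y)"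
      by (rule DERIV_cdivide)
    then have "(betaF f has_real_derivative F 3 1 0 y / 2) (at y)"
      by (rule has_field_derivative_transform_within_open[OF _ open_s]) (use y beta_eq in auto)
    then show ?thesis by (rule DERIV_imp_deriv)
  qed
  have ddbeta: "deriv (deriv (betaF f)) y = F 3 2 0 y / 2" if y: "\<bar>y\<bar> < s" for y
  proof -
    have "((\<lambda>t. F 3 1 0 t) has_real_derivative F 3 2 0 y) (at y)" using dFy[of 0 y 3 1] y s by (simp add: eval_nat_numeral)
    then have "((\<lambda>t. F 3 1 0 t / 2) has_real_derivative F 3 2 0 y / 2) (at y)"
      by (rule DERIV_cdivide)
    then have "(deriv (betaF f) has_real_derivative F 3 2 0 y / 2) (at y)"
      by (rule has_field_derivative_transform_within_open[OF _ open_s]) (use y dbeta in auto)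
    then show ?thesis by (rule DERIV_imp_deriv)
  qed
  have ODE: "\<forall>y. \<bar>y\<bar> < \<epsilon> \<longrightarrow>
               deriv (alphaF f) y + (alphaF f y)^2 + \<mu> = 0 \<and>
               deriv (deriv (betaF f)) y + 4 * alphaF f y * deriv (betaF f) y = 0"
  proof (intro allI impI)
    fix y :: real assume y: "\<bar>y\<bar> < \<epsilon>"
    have ys: "\<bar>y\<bar> < s" using y \<epsilon> by simp
    have "deriv (alphaF f) y + (alphaF f y)^2 + \<mu> = w y - w 0"
      using dalpha[OF ys] alpha_eq[OF ys] by (simp add: w_def \<mu>_def)
    moreover have "deriv (deriv (betaF f)) y + 4 * alphaF f y * deriv (betaF f) y
        = (F 3 2 0 y + 4 * F 2 0 0 y * F 3 1 0 y) / 2"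
      using ddbeta[OF ys] dbeta[OF ys] alpha_eq[OF ys] by (simp add: field_simps)
    ultimately show "deriv (alphaF f) y + (alphaF f y)^2 + \<mu> = 0 \<and>
               deriv (deriv (betaF f)) y + 4 * alphaF f y * deriv (betaF f) y = 0"
      using wc[OF y] E3[OF y] by simp
  qed

  define B0 where "B0 = (\<lambda>x y. 1 - F 1 0 x y ^ 2 - F 0 1 x y ^ 2)"
  define B1 where "B1 = (\<lambda>x y. - (2 * F 0 1 x y * F 1 1 x y) - 2 * F 1 0 x y * F 2 0 x y)"
  define B2 where "B2 = (\<lambda>x y. - (2 * F 0 1 x y * F 2 1 x y) - 2 * F 1 0 x y * F 3 0 x y - 2 * F 1 1 x y ^ 2 - 2 * F 2 0 x y ^ 2)"
  define B3 where "B3 = (\<lambda>x y. - (2 * F 0 1 x y * F 3 1 x y) - 2 * F 1 0 x y * F 4 0 x y - 6 * F 1 1 x y * F 2 1 x y - 6 * F 2 0 x y * F 3 0 x y)"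
  define \<rho> where "\<rho> = s / 2"
  have \<rho>: "0 \<le> \<rho>" "\<rho> < s" "0 < \<rho>" using s by (auto simp: \<rho>_def)
  have bF: "\<exists>M. \<forall>x y. \<bar>x\<bar> \<le> \<rho> \<longrightarrow> \<bar>y\<bar> \<le> \<rho> \<longrightarrow> \<bar>F a b x y\<bar> \<le> M" for a b
    unfolding F_def using FF_bound[OF gc \<rho>(1,2)] by blast
  obtain M01 where M01: "\<And>x y. \<bar>x\<bar> \<le> \<rho> \<Longrightarrow> \<bar>y\<bar> \<le> \<rho> \<Longrightarrow> \<bar>F 0 1 x y\<bar> \<le> M01" using bF by blast
  obtain M31 where M31: "\<And>x y. \<bar>x\<bar> \<le> \<rho> \<Longrightarrow> \<bar>y\<bar> \<le> \<rho> \<Longrightarrow> \<bar>F 3 1 x y\<bar> \<le> M31" using bF by blast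
  obtain M10 where M10: "\<And>x y. \<bar>x\<bar> \<le> \<rho> \<Longrightarrow> \<bar>y\<bar> \<le> \<rho> \<Longrightarrow> \<bar>F 1 0 x y\<bar> \<le> M10" using bF by blast
  obtain M40 where M40: "\<And>x y. \<bar>x\<bar> \<le> \<rho> \<Longrightarrow> \<bar>y\<bar> \<le> \<rho> \<Longrightarrow> \<bar>F 4 0 x y\<bar> \<le> M40" using bF by blast
  obtain M11 where M11: "\<And>x y. \<bar>x\<bar> \<le> \<rho> \<Longrightarrow> \<bar>y\<bar> \<le> \<rho> \<Longrightarrow> \<bar>F 1 1 x y\<bar> \<le> M11" using bF by blast
  obtain M21 where M21: "\<And>x y. \<bar>x\<bar> \<le> \<rho> \<Longrightarrow> \<bar>y\<bar> \<le> \<rho> \<Longrightarrow> \<bar>F 2 1 x y\<bar> \<le> M21" using bF by blast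
  obtain M20 where M20: "\<And>x y. \<bar>x\<bar> \<le> \<rho> \<Longrightarrow> \<bar>y\<bar> \<le> \<rho> \<Longrightarrow> \<bar>F 2 0 x y\<bar> \<le> M20" using bF by blast
  obtain M30 where M30: "\<And>x y. \<bar>x\<bar> \<le> \<rho> \<Longrightarrow> \<bar>y\<bar> \<le> \<rho> \<Longrightarrow> \<bar>F 3 0 x y\<bar> \<le> M30" using bF by blast
  define K where "K = 2 * (M01 * M31) + 2 * (M10 * M40) + 6 * (M11 * M21) + 6 * (M20 * M30)"
  have B3b: "\<bar>B3 x y\<bar> \<le> K" if "\<bar>x\<bar> \<le> \<rho>" "\<bar>y\<bar> \<le> \<rho>" for x y
    unfolding B3_def K_def
    by (rule bnd4) (use that M01 M31 M10 M40 M11 M21 M20 M30 in auto)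
  have K0: "0 \<le> K"
  proof -
    have "\<bar>B3 0 0\<bar> \<le> K" using B3b[of 0 0] \<rho> by simp
    then show ?thesis by (meson abs_ge_zero order_trans)
  qed
  define \<rho>' where "\<rho>' = min \<epsilon> \<rho>"
  have \<rho>': "0 < \<rho>'" "\<rho>' \<le> \<epsilon>" "\<rho>' \<le> \<rho>" using \<epsilon> \<rho> by (auto simp: \<rho>'_def)
  have tay: "\<exists>t. \<bar>t\<bar> \<le> \<bar>x\<bar> \<and> BF f (x,y) = \<mu> * x^2 + B3 t y / 6 * x^3"
    if x: "\<bar>x\<bar> < \<rho>'" and y: "\<bar>y\<bar> < \<rho>'" for x y
  proof -
    have ys: "\<bar>y\<bar> < s" "\<bar>y\<bar> < \<epsilon>" using y \<rho>' \<rho> by auto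
    define dd where "dd = (\<lambda>m::nat. if m = 0 then (\<lambda>t. B0 t y) else if m = 1 then (\<lambda>t. B1 t y)
        else if m = 2 then (\<lambda>t. B2 t y) else (\<lambda>t. B3 t y))"
    have der: "\<forall>m t. m < 3 \<and> \<bar>t\<bar> \<le> \<bar>x\<bar> \<longrightarrow> (dd m has_real_derivative dd (Suc m) t) (at t)"
    proof (intro allI impI)
      fix m :: nat and t :: real assume mt: "m < 3 \<and> \<bar>t\<bar> \<le> \<bar>x\<bar>"
      have ts: "\<bar>t\<bar> < s" using mt x \<rho>' \<rho> by auto
      have dF: "\<And>a b. ((\<lambda>t. F a b t y) has_real_derivative F (a+1) b t y) (at t)" using dFx ts ys by simp
      have "m = 0 \<or> m = 1 \<or> m = 2" using mt by auto
      then show "(dd m has_real_derivative dd (Suc m) t) (at t)"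
      proof (elim disjE)
        assume "m = 0"
        then show ?thesis unfolding dd_def B0_def B1_def
          apply simp
          apply (rule derivative_eq_intros dF refl)+
          apply (simp add: algebra_simps power2_eq_square eval_nat_numeral)
          done
      next
        assume "m = 1"
        then show ?thesis unfolding dd_def B1_def B2_def
          apply simp
          apply (rule derivative_eq_intros dF refl)+
          apply (simp add: algebra_simps power2_eq_square eval_nat_numeral)
          done
      next
        assume "m = 2"
        then show ?thesis unfolding dd_def B2_def B3_def
          apply simp
          apply (rule derivative_eq_intros dF refl)+
          apply (simp add: algebra_simps power2_eq_square eval_nat_numeral)
          done
      qed
    qed
    obtain t where t: "\<bar>t\<bar> \<le> \<bar>x\<bar>"
      and tay: "B0 x y = (\<Sum>m<3. dd m 0 / fact m * x ^ m) + dd 3 t / fact 3 * x ^ 3"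
      using Maclaurin_bi_le[of dd "\<lambda>t. B0 t y" 3 x] der by (auto simp: dd_def)
    have "(\<Sum>m<3. dd m 0 / fact m * x ^ m) = dd 0 0 + dd 1 0 * x + dd 2 0 / 2 * x^2"
      by (simp add: eval_nat_numeral)
    also have "\<dots> = \<mu> * x^2"
    proof -
      have "dd 0 0 = 0" using L01[OF ys(2)] L10[OF ys(2)] by (simp add: dd_def B0_def)
      moreover have "dd 1 0 = 0" using L11[OF ys(2)] L10[OF ys(2)] by (simp add: dd_def B1_def)
      moreover have "dd 2 0 = 2 * \<mu>"
        using L01[OF ys(2)] L10[OF ys(2)] L11[OF ys(2)] wc[OF ys(2)]
        by (simp add: dd_def B2_def \<mu>_def w_def)
      ultimately show ?thesis by simp
    qed
    finally have "B0 x y = \<mu> * x^2 + B3 t y / 6 * x^3" using tay by (simp add: dd_def eval_nat_numeral)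
    moreover have "BF f (x,y) = B0 x y" using BF_eq[of x y] x y \<rho>' \<rho> by (simp add: B0_def)
    ultimately show ?thesis using t by auto
  qed
  have pos: "\<exists>e>0. \<forall>p\<in>U \<inter> ball (0,0) e. \<not> BF f p < 0" if mu: "\<mu> > 0"
  proof -
    define e where "e = min \<rho>' (6 * \<mu> / (K + 1))"
    have e: "e > 0" using \<rho>' mu K0 by (simp add: e_def)
    have "\<forall>p\<in>U \<inter> ball (0,0) e. \<not> BF f p < 0"
    proof
      fix p assume p: "p \<in> U \<inter> ball (0,0) e"
      obtain x y where pxy: "p = (x,y)" by (cases p)
      have xy: "\<bar>x\<bar> < e" "\<bar>y\<bar> < e" using ball_sq[of x y e] p pxy by auto
      then have xy': "\<bar>x\<bar> < \<rho>'" "\<bar>y\<bar> < \<rho>'" by (auto simp: e_def)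
      obtain t where t: "\<bar>t\<bar> \<le> \<bar>x\<bar>" and eq: "BF f (x,y) = \<mu> * x^2 + B3 t y / 6 * x^3"
        using tay[OF xy'] by blast
      have "\<bar>B3 t y\<bar> \<le> K" using B3b[of t y] t xy' \<rho>' by auto
      moreover have "(K+1) * \<bar>x\<bar> \<le> 6 * \<mu>"
      proof -
        have "\<bar>x\<bar> \<le> 6 * \<mu> / (K + 1)" using xy by (simp add: e_def)
        then show ?thesis using K0 by (simp add: field_simps)
      qed
      ultimately have "0 \<le> \<mu> * x^2 + B3 t y / 6 * x^3" by (rule sign_pos)
      then show "\<not> BF f p < 0" using eq pxy by simp
    qed
    then show ?thesis using e by blast
  qed
  have neg: "\<exists>e>0. \<forall>p\<in>U \<inter> ball (0,0) e. \<not> BF f p > 0" if mu: "\<mu> < 0"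
  proof -
    define e where "e = min \<rho>' (- 6 * \<mu> / (K + 1))"
    have "- 6 * \<mu> / (K + 1) > 0" using mu K0 by (intro divide_pos_pos) auto
    then have e: "e > 0" using \<rho>' by (simp add: e_def)
    have "\<forall>p\<in>U \<inter> ball (0,0) e. \<not> BF f p > 0"
    proof
      fix p assume p: "p \<in> U \<inter> ball (0,0) e"
      obtain x y where pxy: "p = (x,y)" by (cases p)
      have xy: "\<bar>x\<bar> < e" "\<bar>y\<bar> < e" using ball_sq[of x y e] p pxy by auto
      then have xy': "\<bar>x\<bar> < \<rho>'" "\<bar>y\<bar> < \<rho>'" by (auto simp: e_def)
      obtain t where t: "\<bar>t\<bar> \<le> \<bar>x\<bar>" and eq: "BF f (x,y) = \<mu> * x^2 + B3 t y / 6 * x^3"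
        using tay[OF xy'] by blast
      have "\<bar>B3 t y\<bar> \<le> K" using B3b[of t y] t xy' \<rho>' by auto
      moreover have "(K+1) * \<bar>x\<bar> \<le> - 6 * \<mu>"
      proof -
        have "\<bar>x\<bar> \<le> - 6 * \<mu> / (K + 1)" using xy by (simp add: e_def)
        then show ?thesis using K0 by (simp add: field_simps)
      qed
      ultimately have "\<mu> * x^2 + B3 t y / 6 * x^3 \<le> 0" by (rule sign_neg)
      then show "\<not> BF f p > 0" using eq pxy by simp
    qed
    then show ?thesis using e by blast
  qed
  have cct: "\<mu> = 0" if ch: "changes_causal_type U f"
  proof (rule ccontr)
    assume "\<mu> \<noteq> 0"
    then consider "\<mu> > 0" | "\<mu> < 0" by linarith
    then show False
    proof cases
      case 1
      then obtain e where e: "e > 0" "\<forall>p\<in>U \<inter> ball (0,0) e. \<not> BF f p < 0" using pos by blast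
      then obtain p where "p \<in> U \<inter> ball (0,0) e" "BF f p < 0" using ch unfolding changes_causal_type_def by blast
      then show False using e by blast
    next
      case 2
      then obtain e where e: "e > 0" "\<forall>p\<in>U \<inter> ball (0,0) e. \<not> BF f p > 0" using neg by blast
      then obtain p where "p \<in> U \<inter> ball (0,0) e" "BF f p > 0" using ch unfolding changes_causal_type_def by blast
      then show False using e by blast
    qed
  qed
  show ?thesis
    using ODE \<epsilon> pos neg cct by blast
qed

end
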